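(* Let $\widetilde{\mathcal A}_{\mathrm{loc}}=\widetilde{\mathcal A}\otimes_{\mathbb Z[q_1^{\pm1},q_2^{\pm1}]}\mathbb Q(q_1,q_2)$. Then $\widetilde{\mathcal A}_{\mathrm{loc}}$ is generated as a $\mathbb Q(q_1,q_2)$-algebra by the elements $\mathscr E_{(m)}$, $m\in\mathbb Z$ (the generators indexed by vectors of length one). Equivalently, the algebra homomorphism $\mathcal U\otimes\mathbb Q(q_1,q_2)\to\widetilde{\mathcal A}_{\mathrm{loc}}$, $E_m\mapsto\mathscr E_{(m)}$, is surjective.
   Context: $\widetilde{\mathcal A}$ is the $\mathbb Z[q_1^{\pm1},q_2^{\pm1}]$-algebra generated by symbols $\mathscr E_{(d_1,\dots,d_n)}$ ($n\ge1$, $d_i\in\mathbb Z$) modulo the relations: for all $d_1,\dots,d_n$ and $1\le i<n$, $\mathscr E_{(d_1,\dots,d_i,d_{i+1},\dots,d_n)}-q_1q_2\mathscr E_{(d_1,\dots,d_i-1,d_{i+1}+1,\dots,d_n)}=(1-q_1)\mathscr E_{(d_1,\dots,d_i)}\mathscr E_{(d_{i+1},\dots,d_n)}$; and for all $d_1,\dots,d_n,k$, $[\mathscr E_{(k)},\mathscr E_{(d_1,\dots,d_n)}]=(q_2-1)\sum_{i=1}^nc_i$ with $c_i=\sum_{a=1}^{k-d_i}\mathscr E_{(d_1,\dots,d_{i-1},k-a,d_i+a,d_{i+1},\dots,d_n)}$ if $k\ge d_i$ and $c_i=-\sum_{a=1}^{d_i-k}\mathscr E_{(d_1,\dots,d_{i-1},d_i-a,k+a,d_{i+1},\dots,d_n)}$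 if $k\le d_i$. $\mathcal U$ is the $\mathbb Z[q_1^{\pm1},q_2^{\pm1}]$-algebra generated by $E_m$ ($m\in\mathbb Z$), with $E(z)=\sum_mE_mz^{-m}$, modulo $E(z)E(w)(z-wq_1)(z-wq_2)(z-\tfrac{w}{q_1q_2})=E(w)E(z)(zq_1-w)(zq_2-w)(\tfrac{z}{q_1q_2}-w)$ and $[[E_{m+1},E_{m-1}],E_m]=0$; the homomorphism $E_m\mapsto\mathscr E_{(m)}$ to $\widetilde{\mathcal A}$ is well defined. *)

theory Defs
  imports "HOL-Library.Poly_Mapping" "HOL-Computational_Algebra.Polynomial"
    "HOL-Computational_Algebra.Fraction_Field"
begin

text \<open>Q(q1,q2) realised as the fraction field of Q[q1][q2]; q1 is the inner
  variable, q2 the outer one.\<close>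
type_synonym qfield = "rat poly poly fract"

definition q1 :: qfield where "q1 = Fract [:[:0, 1:]:] 1"
definition q2 :: qfield where "q2 = Fract [:0, 1:] 1"

text \<open>Generators are the symbols E_d indexed by integer vectors d (only
  nonempty d are used).  An element of the free algebra is a finitely supported
  map from words (lists of symbols) to coefficients.\<close>
type_synonym falg = "int list list \<Rightarrow>\<^sub>0 qfield"

definition fa_mult :: "falg \<Rightarrow> falg \<Rightarrow> falg" where
  "fa_mult p q = (\<Sum>u\<in>Poly_Mapping.keys p. \<Sum>v\<in>Poly_Mapping.keys q.
      Poly_Mapping.single (u @ v) (Poly_Mapping.lookup p u * Poly_Mapping.lookup q v))"

definition fa_scal :: "qfield \<Rightarrow> falg" where
  "fa_scal c = Poly_Mapping.single [] c"

definition fa_gen :: "int list \<Rightarrow> falg" where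
  "fa_gen d = Poly_Mapping.single [d] 1"

definition fa_admissible :: "falg \<Rightarrow> bool" where
  "fa_admissible p \<longleftrightarrow> (\<forall>w\<in>Poly_Mapping.keys p. \<forall>d\<in>set w. d \<noteq> [])"

text \<open>First family: for d = a0 @ [x] @ y # b0 (i.e. d_i = x, d_(i+1) = y):
  E_d - q1 q2 E_(.., x-1, y+1, ..) - (1 - q1) E_(a0@[x]) E_(y#b0).\<close>
definition rel1 :: "int list \<Rightarrow> int \<Rightarrow> int \<Rightarrow> int list \<Rightarrow> falg" where
  "rel1 a0 x y b0 =
     fa_gen (a0 @ [x] @ y # b0)
     - fa_mult (fa_scal (q1 * q2)) (fa_gen (a0 @ [x - 1] @ (y + 1) # b0))
     - fa_mult (fa_scal (1 - q1)) (fa_mult (fa_gen (a0 @ [x])) (fa_gen (y # b0)))"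

text \<open>The summand c_i (0-based index i) of the commutator relation.  For
  k >= d_i the second sum is empty and for k <= d_i the first one is empty,
  so this agrees with the case distinction of the paper.\<close>
definition rel_c :: "int \<Rightarrow> int list \<Rightarrow> nat \<Rightarrow> falg" where
  "rel_c k d i =
     (\<Sum>t\<in>{1..k - d ! i}. fa_gen (take i d @ [k - t, d ! i + t] @ drop (Suc i) d))
     - (\<Sum>t\<in>{1..d ! i - k}. fa_gen (take i d @ [d ! i - t, k + t] @ drop (Suc i) d))"

definition rel2 :: "int \<Rightarrow> int list \<Rightarrow> falg" where
  "rel2 k d =
     fa_mult (fa_gen [k]) (fa_gen d) - fa_mult (fa_gen d) (fa_gen [k])
     - fa_mult (fa_scal (q2 - 1)) (\<Sum>i<length d. rel_c k d i)"

definition rels :: "falg set" where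
  "rels = {rel1 a0 x y b0 | a0 x y b0. True} \<union> {rel2 k d | k d. d \<noteq> []}"

inductive_set fa_ideal :: "falg set \<Rightarrow> falg set" for R where
  base: "r \<in> R \<Longrightarrow> r \<in> fa_ideal R"
| zero: "0 \<in> fa_ideal R"
| add: "a \<in> fa_ideal R \<Longrightarrow> b \<in> fa_ideal R \<Longrightarrow> a + b \<in> fa_ideal R"
| mult: "a \<in> fa_ideal R \<Longrightarrow> fa_mult (fa_mult x a) y \<in> fa_ideal R"

inductive_set fa_subalg :: "int list set \<Rightarrow> falg set" for S where
  scal: "fa_scal c \<in> fa_subalg S"
| gen: "d \<in> S \<Longrightarrow> fa_gen d \<in> fa_subalg S"
| add: "a \<in> fa_subalg S \<Longrightarrow> b \<in> fa_subalg S \<Longrightarrow> a + b \<in> fa_subalg S"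
| mult: "a \<in> fa_subalg S \<Longrightarrow> b \<in> fa_subalg S \<Longrightarrow> fa_mult a b \<in> fa_subalg S"

end

theory Submission imports Defs begin

lemma lookup_single': "Poly_Mapping.lookup (Poly_Mapping.single k v) k' = (if k = k' then v else 0)"
  by (simp add: lookup_single when_def)

lemma fa_mult_lookup:
  "Poly_Mapping.lookup (fa_mult p q) w =
     (\<Sum>i\<le>length w. Poly_Mapping.lookup p (take i w) * Poly_Mapping.lookup q (drop i w))"
proof -
  let ?f = "\<lambda>x. Poly_Mapping.lookup p (fst x) * Poly_Mapping.lookup q (snd x)"
  let ?K = "Poly_Mapping.keys p \<times> Poly_Mapping.keys q"
  define T where "T = (\<lambda>i. (take i w, drop i w)) ` {..length w}"
  have T: "T = {x. fst x @ snd x = w}"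
    unfolding T_def
  proof (auto, goal_cases)
    case (1 a b)
    then show ?case by (intro image_eqI[where x="length a"]) auto
  qed
  have fin: "finite ?K" by simp
  have "Poly_Mapping.lookup (fa_mult p q) w =
     (\<Sum>u\<in>Poly_Mapping.keys p. \<Sum>v\<in>Poly_Mapping.keys q. if u @ v = w then Poly_Mapping.lookup p u * Poly_Mapping.lookup q v else 0)"
    by (simp add: fa_mult_def lookup_sum lookup_single')
  also have "\<dots> = (\<Sum>x\<in>?K. if x \<in> T then ?f x else 0)"
    by (simp add: sum.cartesian_product T case_prod_beta)
  also have "\<dots> = (\<Sum>x\<in>?K \<inter> T. ?f x)"
    by (simp add: sum.inter_restrict[OF fin, symmetric] if_distrib)
  also have "\<dots> = (\<Sum>x\<in>T. ?f x)"
    by (rule sum.mono_neutral_left) (auto simp: T_def in_keys_iff)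
  also have "\<dots> = (\<Sum>i\<le>length w. ?f (take i w, drop i w))"
    unfolding T_def by (subst sum.reindex) (auto simp: inj_on_def dest!: arg_cong[where f=length])
  finally show ?thesis by simp
qed


abbreviation lk where "lk \<equiv> Poly_Mapping.lookup"

definition sc :: "qfield \<Rightarrow> falg \<Rightarrow> falg" where "sc c p = fa_mult (fa_scal c) p"

lemma take_eq_Nil_iff: "i \<le> length w \<Longrightarrow> (take i w = []) = (i = 0 \<or> w = [])" by auto

lemma lookup_sc [simp]: "lk (sc c p) w = c * lk p w"
proof -
  have "lk (sc c p) w = (\<Sum>i\<le>length w. (if i = 0 then c * lk p w else 0))"
    unfolding sc_def fa_mult_lookup fa_scal_def
    by (rule sum.cong) (auto simp: lookup_single')
  also have "\<dots> = c * lk p w" by simp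
  finally show ?thesis .
qed

lemma fa_mult_scal_right [simp]: "lk (fa_mult p (fa_scal c)) w = lk p w * c"
proof -
  have "lk (fa_mult p (fa_scal c)) w = (\<Sum>i\<le>length w. (if i = length w then lk p w * c else 0))"
    unfolding fa_mult_lookup fa_scal_def
    by (rule sum.cong) (auto simp: lookup_single')
  also have "\<dots> = lk p w * c" by simp
  finally show ?thesis .
qed

lemma fa_mult_scal1_right: "fa_mult p (fa_scal 1) = p"
  by (rule poly_mapping_eqI) simp

lemma fa_mult_scal1_left: "fa_mult (fa_scal 1) p = p"
  using lookup_sc[of 1 p] by (intro poly_mapping_eqI) (simp add: sc_def)

lemma fa_mult_add_left: "fa_mult (a + b) c = fa_mult a c + fa_mult b c"
  by (rule poly_mapping_eqI) (simp add: fa_mult_lookup lookup_add distrib_right sum.distrib)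

lemma fa_mult_add_right: "fa_mult a (b + c) = fa_mult a b + fa_mult a c"
  by (rule poly_mapping_eqI) (simp add: fa_mult_lookup lookup_add distrib_left sum.distrib)

lemma fa_mult_diff_left: "fa_mult (a - b) c = fa_mult a c - fa_mult b c"
  by (rule poly_mapping_eqI) (simp add: fa_mult_lookup lookup_minus left_diff_distrib sum_subtractf)

lemma fa_mult_diff_right: "fa_mult a (b - c) = fa_mult a b - fa_mult a c"
  by (rule poly_mapping_eqI) (simp add: fa_mult_lookup lookup_minus right_diff_distrib sum_subtractf)

lemma fa_mult_single: "fa_mult (Poly_Mapping.single u a) (Poly_Mapping.single v b) = Poly_Mapping.single (u @ v) (a * b)"
  by (simp add: fa_mult_def)

lemma sc_sc: "sc a (sc b p) = sc (a * b) p"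
  by (rule poly_mapping_eqI) simp

lemma sc_one: "sc 1 p = p"
  by (rule poly_mapping_eqI) simp

lemma sc_add: "sc a (p + q) = sc a p + sc a q"
  by (rule poly_mapping_eqI) (simp add: lookup_add distrib_left)

lemma sc_diff: "sc a (p - q) = sc a p - sc a q"
  by (rule poly_mapping_eqI) (simp add: lookup_minus right_diff_distrib)

lemma sc_minus: "sc a (- q) = - sc a q"
  by (rule poly_mapping_eqI) simp

lemma sc_sum_scal: "sc (\<Sum>t\<in>A. f t) p = (\<Sum>t\<in>A. sc (f t) p)"
  by (rule poly_mapping_eqI) (simp add: lookup_sum sum_distrib_right)

lemma sc_sum: "sc a (\<Sum>t\<in>A. f t) = (\<Sum>t\<in>A. sc a (f t))"
  by (rule poly_mapping_eqI) (simp add: lookup_sum sum_distrib_left)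

lemma sum_singles: "p = (\<Sum>w\<in>Poly_Mapping.keys p. Poly_Mapping.single w (lk p w))"
  by (rule poly_mapping_eqI) (simp add: lookup_sum lookup_single' in_keys_iff)


abbreviation S0 where "S0 \<equiv> fa_subalg {[m] | m. True}"
abbreviation I0 where "I0 \<equiv> fa_ideal rels"
definition M :: "falg set" where "M = {p. \<exists>s\<in>S0. p - s \<in> I0}"

lemma sc_neg1: "sc (-1) a = - a"
  by (rule poly_mapping_eqI) simp

lemma I_sc: "a \<in> I0 \<Longrightarrow> sc c a \<in> I0"
  using fa_ideal.mult[of a rels "fa_scal c" "fa_scal 1"] by (simp add: fa_mult_scal1_right sc_def)
lemma I_neg: "a \<in> I0 \<Longrightarrow> - a \<in> I0"
  using I_sc[of a "-1"] by (simp add: sc_neg1)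
lemma I_diff: "a \<in> I0 \<Longrightarrow> b \<in> I0 \<Longrightarrow> a - b \<in> I0"
  using fa_ideal.add[OF _ I_neg, of a b] by simp
lemma I_multl: "a \<in> I0 \<Longrightarrow> fa_mult x a \<in> I0"
  using fa_ideal.mult[of a rels x "fa_scal 1"] by (simp add: fa_mult_scal1_right)
lemma I_multr: "a \<in> I0 \<Longrightarrow> fa_mult a y \<in> I0"
  using fa_ideal.mult[of a rels "fa_scal 1" y] by (simp add: fa_mult_scal1_left)

lemma S_sc: "a \<in> S0 \<Longrightarrow> sc c a \<in> S0"
  unfolding sc_def by (intro fa_subalg.mult fa_subalg.scal)
lemma S_neg: "a \<in> S0 \<Longrightarrow> - a \<in> S0"
  using S_sc[of a "-1"] by (simp add: sc_neg1)
lemma S_zero: "0 \<in> S0"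
  using fa_subalg.scal[of 0] by (simp add: fa_scal_def)

lemma M_S: "a \<in> S0 \<Longrightarrow> a \<in> M"
  unfolding M_def using fa_ideal.zero[of rels] by (intro CollectI bexI[of _ a]) simp_all
lemma M_I: "a \<in> I0 \<Longrightarrow> a \<in> M"
  unfolding M_def using S_zero by (intro CollectI bexI[of _ 0]) simp_all
lemma M_zero: "0 \<in> M" using M_S S_zero by blast
lemma M_add: "a \<in> M \<Longrightarrow> b \<in> M \<Longrightarrow> a + b \<in> M"
proof -
  assume "a \<in> M" "b \<in> M"
  then obtain s t where "s \<in> S0" "t \<in> S0" "a - s \<in> I0" "b - t \<in> I0" unfolding M_def by blast
  moreover have eq: "(a + b) - (s + t) = (a - s) + (b - t)" by (simp add: algebra_simps)
  ultimately have "s + t \<in> S0" "(a + b) - (s + t) \<in> I0"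
    by (auto intro: fa_subalg.add simp only: eq intro!: fa_ideal.add)
  then show ?thesis unfolding M_def by blast
qed
lemma M_sc: "a \<in> M \<Longrightarrow> sc c a \<in> M"
proof -
  assume "a \<in> M"
  then obtain s where "s \<in> S0" "a - s \<in> I0" unfolding M_def by blast
  then have "sc c s \<in> S0" "sc c a - sc c s \<in> I0" using S_sc I_sc[of "a - s" c] by (auto simp: sc_diff)
  then show ?thesis unfolding M_def by blast
qed
lemma M_neg: "a \<in> M \<Longrightarrow> - a \<in> M"
  using M_sc[of a "-1"] by (simp add: sc_neg1)
lemma M_diff: "a \<in> M \<Longrightarrow> b \<in> M \<Longrightarrow> a - b \<in> M"
  using M_add[OF _ M_neg, of a b] by simp
lemma M_mult: "a \<in> M \<Longrightarrow> b \<in> M \<Longrightarrow> fa_mult a b \<in> M"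
proof -
  assume "a \<in> M" "b \<in> M"
  then obtain s t where st: "s \<in> S0" "t \<in> S0" "a - s \<in> I0" "b - t \<in> I0" unfolding M_def by blast
  have "fa_mult a b - fa_mult s t = fa_mult (a - s) b + fa_mult s (b - t)"
    by (simp add: fa_mult_diff_left fa_mult_diff_right)
  moreover have "fa_mult (a - s) b + fa_mult s (b - t) \<in> I0"
    using st by (intro fa_ideal.add I_multl I_multr)
  moreover have "fa_mult s t \<in> S0" using st by (intro fa_subalg.mult)
  ultimately show ?thesis unfolding M_def by (intro CollectI bexI[of _ "fa_mult s t"]) simp_all
qed
lemma M_sum: "(\<And>t. t \<in> A \<Longrightarrow> f t \<in> M) \<Longrightarrow> (\<Sum>t\<in>A. f t) \<in> M"
  by (induction A rule: infinite_finite_induct) (auto intro: M_zero M_add)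
lemma M_sc_inv: "sc c a \<in> M \<Longrightarrow> c \<noteq> 0 \<Longrightarrow> a \<in> M"
proof -
  assume "sc c a \<in> M" "c \<noteq> 0"
  moreover have "sc (inverse c) (sc c a) = a"
    using \<open>c \<noteq> 0\<close> by (intro poly_mapping_eqI) simp
  ultimately show ?thesis using M_sc[of "sc c a" "inverse c"] by simp
qed
lemma M_rel1: "rel1 a0 x y b0 \<in> M"
  by (intro M_I fa_ideal.base) (auto simp: rels_def)
lemma M_rel2: "d \<noteq> [] \<Longrightarrow> rel2 k d \<in> M"
  by (intro M_I fa_ideal.base) (auto simp: rels_def)
lemma M_gen1: "fa_gen [m] \<in> M"
  by (intro M_S fa_subalg.gen) blast

definition PP :: "rat poly poly" where "PP = [:[:0,1:]:] * [:0,1:]"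

lemma qq: "q1 * q2 = Fract PP 1" by (simp add: q1_def q2_def PP_def)

lemma Fract_pow: "(Fract (a::rat poly poly) 1) ^ j = Fract (a ^ j) 1"
  by (induction j) (simp_all add: One_fract_def)

lemma Fract_sum: "(\<Sum>j\<in>A. Fract (f j :: rat poly poly) 1) = Fract (\<Sum>j\<in>A. f j) 1"
  by (induction A rule: infinite_finite_induct) (simp_all add: Zero_fract_def)

lemma Fract_eq0: "Fract (a :: rat poly poly) 1 = 0 \<longleftrightarrow> a = 0"
  by (simp add: Zero_fract_def eq_fract)

lemma coeff_PP: "coeff PP 0 = 0" by (simp add: PP_def)

lemma geom_nz: "r \<ge> 1 \<Longrightarrow> (\<Sum>j<r. (q1 * q2) ^ j) \<noteq> 0"
proof -
  assume r: "r \<ge> 1"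
  have "coeff (\<Sum>j<r. PP ^ j) 0 = (\<Sum>j<r. (coeff PP 0) ^ j)"
    by (simp add: coeff_sum coeff_0_power)
  also have "\<dots> = (\<Sum>j<r. if j = 0 then 1 else 0)"
    by (rule sum.cong) (auto simp: coeff_PP)
  also have "\<dots> = 1" using r by simp
  finally have "(\<Sum>j<r. PP ^ j) \<noteq> 0" by auto
  then show ?thesis by (simp add: qq Fract_pow Fract_sum Fract_eq0)
qed

lemma q_nz: "q1 * q2 \<noteq> 0"
  by (simp add: qq Fract_eq0 PP_def)

lemma q2_ne1: "q2 - 1 \<noteq> 0"
proof -
  have "coeff ([:0,1:] - 1 :: rat poly poly) 1 = 1" by (simp add: one_pCons)
  then have "([:0,1:] - 1 :: rat poly poly) \<noteq> 0" by (metis coeff_0 zero_neq_one)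
  then show ?thesis by (simp add: q2_def One_fract_def Fract_eq0)
qed


lemma move:
  assumes H: "\<And>d'. d' \<noteq> [] \<Longrightarrow> length d' < n \<Longrightarrow> fa_gen d' \<in> M"
    and len: "length a0 + length b0 + 2 = n"
  shows "fa_gen (a0@[x]@y#b0) - sc (q1*q2) (fa_gen (a0@[x-1]@(y+1)#b0)) \<in> M"
proof -
  have prod: "fa_mult (fa_gen (a0@[x])) (fa_gen (y#b0)) \<in> M"
    using len by (intro M_mult H) auto
  have "fa_gen (a0@[x]@y#b0) - sc (q1*q2) (fa_gen (a0@[x-1]@(y+1)#b0))
      = rel1 a0 x y b0 + sc (1 - q1) (fa_mult (fa_gen (a0@[x])) (fa_gen (y#b0)))"
    unfolding rel1_def sc_def by simp
  then show ?thesis using M_add[OF M_rel1 M_sc[OF prod]] by simp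
qed

lemma move_iff:
  assumes H: "\<And>d'. d' \<noteq> [] \<Longrightarrow> length d' < n \<Longrightarrow> fa_gen d' \<in> M"
    and len: "length a0 + length b0 + 2 = n"
  shows "fa_gen (a0@[x]@y#b0) \<in> M \<longleftrightarrow> fa_gen (a0@[x-1]@(y+1)#b0) \<in> M"
proof
  note mv = move[OF H len, of x y]
  assume A: "fa_gen (a0@[x]@y#b0) \<in> M"
  have "sc (q1*q2) (fa_gen (a0@[x-1]@(y+1)#b0)) \<in> M"
    using M_diff[OF A mv] by (simp add: diff_diff_eq2)
  then show "fa_gen (a0@[x-1]@(y+1)#b0) \<in> M" using M_sc_inv q_nz by blast
next
  note mv = move[OF H len, of x y]
  assume "fa_gen (a0@[x-1]@(y+1)#b0) \<in> M"
  then have "sc (q1*q2) (fa_gen (a0@[x-1]@(y+1)#b0)) \<in> M" by (rule M_sc)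
  from M_add[OF mv this] show "fa_gen (a0@[x]@y#b0) \<in> M" by simp
qed

lemma shift_nat:
  assumes H: "\<And>d'. d' \<noteq> [] \<Longrightarrow> length d' < n \<Longrightarrow> fa_gen d' \<in> M"
    and len: "length a0 + length b0 + 2 = n"
  shows "fa_gen (a0@[x]@y#b0) \<in> M \<longleftrightarrow> fa_gen (a0@[x - int m]@(y + int m)#b0) \<in> M"
proof (induction m arbitrary: x y)
  case 0
  then show ?case by simp
next
  case (Suc m)
  have "fa_gen (a0@[x]@y#b0) \<in> M \<longleftrightarrow> fa_gen (a0@[x-1]@(y+1)#b0) \<in> M"
    by (rule move_iff[OF H len])
  also have "\<dots> \<longleftrightarrow> fa_gen (a0@[x - 1 - int m]@(y + 1 + int m)#b0) \<in> M"
    by (rule Suc.IH)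
  finally show ?case by (simp add: algebra_simps)
qed

lemma shift_int:
  assumes H: "\<And>d'. d' \<noteq> [] \<Longrightarrow> length d' < n \<Longrightarrow> fa_gen d' \<in> M"
    and len: "length a0 + length b0 + 2 = n"
  shows "fa_gen (a0@[x]@y#b0) \<in> M \<longleftrightarrow> fa_gen (a0@[x + j]@(y - j)#b0) \<in> M"
proof (cases "j \<ge> 0")
  case True
  have "fa_gen (a0@[x + j]@(y - j)#b0) \<in> M \<longleftrightarrow>
        fa_gen (a0@[x + j - int (nat j)]@(y - j + int (nat j))#b0) \<in> M"
    by (rule shift_nat[OF H len])
  then show ?thesis using True by simp
next
  case False
  have "fa_gen (a0@[x]@y#b0) \<in> M \<longleftrightarrow>
        fa_gen (a0@[x - int (nat (-j))]@(y + int (nat (-j)))#b0) \<in> M"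
    by (rule shift_nat[OF H len])
  then show ?thesis using False by simp
qed

lemma normal:
  assumes H: "\<And>d'. d' \<noteq> [] \<Longrightarrow> length d' < n \<Longrightarrow> fa_gen d' \<in> M"
  shows "length a0 + 1 + length t = n \<Longrightarrow> fa_gen (a0 @ x # t) \<in> M \<longleftrightarrow>
     fa_gen (a0 @ (x + sum_list t - int (length t) * k) # replicate (length t) k) \<in> M"
proof (induction t arbitrary: a0 x)
  case Nil
  then show ?case by simp
next
  case (Cons y t)
  have lenC: "length a0 + length (replicate (length t) k) + 2 = n" using Cons.prems by simp
  let ?y = "y + sum_list t - int (length t) * k"
  have "fa_gen (a0 @ x # y # t) \<in> M \<longleftrightarrow> fa_gen ((a0 @ [x]) @ y # t) \<in> M" by simp
  also have "\<dots> \<longleftrightarrow> fa_gen ((a0 @ [x]) @ ?y # replicate (length t) k) \<in> M"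
    using Cons.prems by (intro Cons.IH) simp
  also have "\<dots> \<longleftrightarrow> fa_gen (a0 @ [x] @ ?y # replicate (length t) k) \<in> M" by simp
  also have "\<dots> \<longleftrightarrow> fa_gen (a0 @ [x + (?y - k)] @ (?y - (?y - k)) # replicate (length t) k) \<in> M"
    by (intro shift_int[OF H lenC])
  also have "\<dots> \<longleftrightarrow> fa_gen (a0 @ (x + sum_list (y # t) - int (length (y # t)) * k) # replicate (length (y # t)) k) \<in> M"
    by (simp add: algebra_simps)
  finally show ?case .
qed


lemma geomD:
  assumes H: "\<And>d'. d' \<noteq> [] \<Longrightarrow> length d' < n \<Longrightarrow> fa_gen d' \<in> M"
    and len: "length b + 2 = n"
  shows "fa_gen (x # y # b) - sc ((q1*q2)^j) (fa_gen ((x - int j) # (y + int j) # b)) \<in> M"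
proof (induction j)
  case 0
  then show ?case using M_zero by (simp add: sc_one)
next
  case (Suc j)
  have mv: "fa_gen ((x - int j) # (y + int j) # b) - sc (q1*q2) (fa_gen ((x - int j - 1) # (y + int j + 1) # b)) \<in> M"
  proof -
    have len0: "length ([]::int list) + length b + 2 = n" using len by simp
    show ?thesis using move[OF H len0, of "x - int j" "y + int j"] by simp
  qed
  have "fa_gen (x # y # b) - sc ((q1*q2)^j) (fa_gen ((x - int j) # (y + int j) # b))
     + sc ((q1*q2)^j) (fa_gen ((x - int j) # (y + int j) # b) - sc (q1*q2) (fa_gen ((x - int j - 1) # (y + int j + 1) # b)))
     \<in> M" using M_add[OF Suc.IH M_sc[OF mv]] .
  moreover have "fa_gen (x # y # b) - sc ((q1*q2)^j) (fa_gen ((x - int j) # (y + int j) # b))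
     + sc ((q1*q2)^j) (fa_gen ((x - int j) # (y + int j) # b) - sc (q1*q2) (fa_gen ((x - int j - 1) # (y + int j + 1) # b)))
     = fa_gen (x # y # b) - sc ((q1*q2)^Suc j) (fa_gen ((x - int (Suc j)) # (y + int (Suc j)) # b))"
    by (simp add: sc_diff sc_sc algebra_simps)
  ultimately show ?case by simp
qed

lemma canon:
  assumes H: "\<And>d'. d' \<noteq> [] \<Longrightarrow> length d' < n \<Longrightarrow> fa_gen d' \<in> M"
    and n: "n \<ge> 2" and r: "r \<ge> 1"
  shows "fa_gen ((k + int r) # replicate (n - 1) k) \<in> M"
proof -
  define b where "b = replicate (n - 2) k"
  define d where "d = (k + int r) # b"
  have lenb: "length b + 2 = n" using n by (simp add: b_def)
  have lend: "length d = n - 1" using n by (simp add: d_def b_def)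
  define X where "X = (\<Sum>t\<in>{1..int r}. fa_gen ((k + int r - t) # (k + t) # b))"
  define u where "u = fa_gen (k # (k + int r) # b)"
  have c0: "rel_c k d 0 = - X"
    unfolding rel_c_def X_def d_def using r by simp
  have ci: "rel_c k d i = 0" if "i \<in> {..<n-1}" "i \<noteq> 0" for i
  proof -
    have "d ! i = k" using that n unfolding d_def b_def
      by (cases i) auto
    then show ?thesis unfolding rel_c_def by simp
  qed
  have sumc: "(\<Sum>i<length d. rel_c k d i) = - X"
  proof -
    have "(\<Sum>i<length d. rel_c k d i) = rel_c k d 0"
      using n lend ci by (subst sum.remove[of _ 0]) (auto intro!: sum.neutral)
    then show ?thesis using c0 by simp
  qed
  have gd: "fa_gen d \<in> M" using lend n by (intro H) (auto simp: d_def)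
  have comm: "fa_mult (fa_gen [k]) (fa_gen d) - fa_mult (fa_gen d) (fa_gen [k]) \<in> M"
    by (intro M_diff M_mult gd M_gen1)
  have "rel2 k d = fa_mult (fa_gen [k]) (fa_gen d) - fa_mult (fa_gen d) (fa_gen [k]) - sc (q2 - 1) (- X)"
    unfolding rel2_def sumc sc_def ..
  then have "sc (q2 - 1) (- X) = (fa_mult (fa_gen [k]) (fa_gen d) - fa_mult (fa_gen d) (fa_gen [k])) - rel2 k d"
    by simp
  also have "\<dots> \<in> M" by (rule M_diff[OF comm M_rel2]) (simp add: d_def)
  finally have "- X \<in> M" using M_sc_inv q2_ne1 by blast
  then have XM: "X \<in> M" using M_neg by fastforce
  define Y where "Y = (\<Sum>t\<in>{1..int r}. sc ((q1*q2) ^ nat (int r - t)) u)"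
  have "X - Y = (\<Sum>t\<in>{1..int r}. fa_gen ((k + int r - t) # (k + t) # b) - sc ((q1*q2) ^ nat (int r - t)) u)"
    unfolding X_def Y_def by (simp add: sum_subtractf)
  also have "\<dots> \<in> M"
  proof (rule M_sum)
    fix t assume t: "t \<in> {1..int r}"
    have "fa_gen ((k + int r - t) # (k + t) # b) - sc ((q1*q2) ^ nat (int r - t))
      (fa_gen ((k + int r - t - int (nat (int r - t))) # (k + t + int (nat (int r - t))) # b)) \<in> M"
      by (rule geomD[OF H lenb])
    moreover have "(k + int r - t - int (nat (int r - t))) = k" "k + t + int (nat (int r - t)) = k + int r"
      using t by auto
    ultimately show "fa_gen ((k + int r - t) # (k + t) # b) - sc ((q1*q2) ^ nat (int r - t)) u \<in> M"
      unfolding u_def by simp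
  qed
  finally have "X - Y \<in> M" .
  then have YM: "Y \<in> M" using M_diff[OF XM] by (metis diff_diff_eq2 add_diff_cancel_left')
  have "Y = sc (\<Sum>t\<in>{1..int r}. (q1*q2) ^ nat (int r - t)) u"
    unfolding Y_def by (simp add: sc_sum_scal)
  also have "(\<Sum>t\<in>{1..int r}. (q1*q2) ^ nat (int r - t)) = (\<Sum>j<r. (q1*q2) ^ j)"
    by (rule sum.reindex_bij_witness[of _ "\<lambda>j. int r - int j" "\<lambda>t. nat (int r - t)"]) auto
  finally have "sc (\<Sum>j<r. (q1*q2) ^ j) u \<in> M" using YM by simp
  then have uM: "u \<in> M" using M_sc_inv geom_nz[OF r] by blast
  have "fa_gen ([] @ [k] @ (k + int r) # b) \<in> M \<longleftrightarrow> fa_gen ([] @ [k + int r] @ (k + int r - int r) # b) \<in> M"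
  proof -
    have len0: "length ([]::int list) + length b + 2 = n" using lenb by simp
    show ?thesis by (rule shift_int[OF H len0])
  qed
  then have "fa_gen ((k + int r) # k # b) \<in> M" using uM unfolding u_def by simp
  moreover have "(k + int r) # k # b = (k + int r) # replicate (n - 1) k"
    using n by (simp add: b_def replicate_Suc[symmetric] Suc_diff_Suc numeral_2_eq_2)
  ultimately show ?thesis by simp
qed


lemma gen_good: "d \<noteq> [] \<Longrightarrow> fa_gen d \<in> M"
proof (induction "length d" arbitrary: d rule: less_induct)
  case less
  define n where "n = length d"
  have H: "\<And>d'. d' \<noteq> [] \<Longrightarrow> length d' < n \<Longrightarrow> fa_gen d' \<in> M"
    using less.hyps unfolding n_def by blast
  obtain x t where d: "d = x # t" using less.prems by (cases d) auto
  show ?case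
  proof (cases "t = []")
    case True
    then show ?thesis using d M_gen1 by simp
  next
    case False
    have n2: "n \<ge> 2" using False d n_def by (cases t) auto
    have lt: "length t = n - 1" using d n_def by simp
    define s where "s = x + sum_list t"
    define k where "k = (s - 1) div int n"
    define r where "r = nat ((s - 1) mod int n + 1)"
    have npos: "int n > 0" using n2 by simp
    have r1: "r \<ge> 1" unfolding r_def using pos_mod_sign[OF npos, of "s - 1"] by simp
    have rr: "int r = (s - 1) mod int n + 1" unfolding r_def using pos_mod_sign[OF npos, of "s - 1"] by simp
    have "s - 1 = int n * k + (s - 1) mod int n" unfolding k_def by simp
    then have keq: "s - int (n - 1) * k = k + int r" using rr n2 by (simp add: of_nat_diff algebra_simps)
    have len0: "length ([]::int list) + 1 + length t = n" using lt n2 by simp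
    have "fa_gen ([] @ x # t) \<in> M \<longleftrightarrow>
       fa_gen ([] @ (x + sum_list t - int (length t) * k) # replicate (length t) k) \<in> M"
      by (rule normal[OF H len0])
    moreover have "fa_gen ((k + int r) # replicate (n - 1) k) \<in> M" by (rule canon[OF H n2 r1])
    ultimately show ?thesis using keq lt d unfolding s_def by simp
  qed
qed

lemma single_good: "(\<forall>d\<in>set w. d \<noteq> []) \<Longrightarrow> Poly_Mapping.single w c \<in> M"
proof (induction w)
  case Nil
  then show ?case using M_S[OF fa_subalg.scal[of c]] by (simp add: fa_scal_def)
next
  case (Cons d w)
  have "fa_mult (fa_gen d) (Poly_Mapping.single w c) \<in> M"
    using Cons by (intro M_mult gen_good) auto
  then show ?case by (simp add: fa_gen_def fa_mult_single)
qed

theorem proposition2p13: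
  fixes p :: falg
  assumes "fa_admissible p"
  shows "\<exists>s\<in>fa_subalg {[m] | m. True}. p - s \<in> fa_ideal rels"
proof -
  have "(\<Sum>w\<in>Poly_Mapping.keys p. Poly_Mapping.single w (lk p w)) \<in> M"
    using assms unfolding fa_admissible_def by (intro M_sum single_good) auto
  then have "p \<in> M" using sum_singles[of p] by simp
  then show ?thesis unfolding M_def by blast
qed

end
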